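(* Let $P$ be as below. There are $C>0$ and $\delta>0$ such that for $\operatorname{Im}\omega\ge C$, the $L^2$ resolvent satisfies $\mathcal R^{L^2}(\omega)=(P-\omega)^{-1}:\mathscr A_\delta\to\mathscr A_\delta$.
   Context: $\mathbb T^n=\mathbb R^n/2\pi\mathbb Z^n$. $P$ is self-adjoint on $L^2(\mathbb T^n)$ and given by $Pu(x)=\lim_{\epsilon\to0+}\lim_{\delta\to0+}(2\pi)^{-n}\int e^{i\langle x-y,\xi\rangle-\epsilon|\xi|^2-\delta|x-y|^2}p(x,\xi)u(y)dyd\xi$, where $p$ is $2\pi\mathbb Z^n$-periodic in $x$ and extends holomorphically with $|p(z,\zeta)|\le C\langle\operatorname{Re}\zeta\rangle^m$, $m=0$, for $|\operatorname{Im}z|\le a$, $|\operatorname{Im}\zeta|\le b\langle\operatorname{Re}\zeta\rangle$. $\mathscr A_\delta=\{u\in L^2(\mathbb T^n):\|u\|^2_{\mathscr A_\delta}=\sum_{k\in\mathbb Z^n}|\hat u(k)|^2e^{4|k|\delta}<\infty\}$. *)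

theory Defs
  imports "HOL-Analysis.Analysis"
begin

text \<open>The torus is R^n / 2 pi Z^n, n = CARD('n). Functions in L^2(T^n) are represented by their Fourier
  coefficients (Plancherel), i.e. by square-summable families int^'n => complex.\<close>

definition lnorm :: "int ^ 'n::finite \<Rightarrow> real" where
  "lnorm k = sqrt (\<Sum>i\<in>UNIV. (real_of_int (k $ i))\<^sup>2)"

definition vRe :: "complex ^ 'n::finite \<Rightarrow> real ^ 'n" where
  "vRe z = (\<chi> i. Re (z $ i))"

definition vIm :: "complex ^ 'n::finite \<Rightarrow> real ^ 'n" where
  "vIm z = (\<chi> i. Im (z $ i))"

definition cvec :: "real ^ 'n::finite \<Rightarrow> complex ^ 'n" where
  "cvec x = (\<chi> i. complex_of_real (x $ i))"

definition ivec :: "int ^ 'n::finite \<Rightarrow> real ^ 'n" where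
  "ivec k = (\<chi> i. real_of_int (k $ i))"

definition jbr :: "real ^ 'n::finite \<Rightarrow> real" where
  "jbr \<xi> = sqrt (1 + (norm \<xi>)\<^sup>2)"

definition symb_region :: "real \<Rightarrow> real \<Rightarrow> ((complex ^ 'n) \<times> (complex ^ 'n::finite)) set" where
  "symb_region a b = {(z, \<zeta>). norm (vIm z) \<le> a \<and> norm (vIm \<zeta>) \<le> b * jbr (vRe \<zeta>)}"

text \<open>Holomorphy in several complex variables: complex (Frechet) differentiability,
  i.e. real differentiability with a complex-linear derivative, at every point of U.\<close>
definition holo2 :: "((complex ^ 'n::finite) \<Rightarrow> (complex ^ 'n) \<Rightarrow> complex) \<Rightarrow>
    ((complex ^ 'n) \<times> (complex ^ 'n)) set \<Rightarrow> bool" where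
  "holo2 p U \<longleftrightarrow> open U \<and> (\<forall>w\<in>U. \<exists>D. ((\<lambda>(z, \<zeta>). p z \<zeta>) has_derivative D) (at w) \<and>
      (\<forall>h1 h2. D (\<i> *s h1, \<i> *s h2) = \<i> * D (h1, h2)))"

definition tcube :: "(real ^ 'n::finite) set" where
  "tcube = cbox 0 (\<chi> i. 2 * pi)"

definition symc :: "((complex ^ 'n::finite) \<Rightarrow> (complex ^ 'n) \<Rightarrow> complex) \<Rightarrow> int ^ 'n \<Rightarrow> int ^ 'n \<Rightarrow> complex" where
  "symc p m j = complex_of_real (1 / (2 * pi) ^ CARD('n)) *
     integral tcube (\<lambda>x. exp (- \<i> * complex_of_real (ivec m \<bullet> x)) * p (cvec x) (cvec (ivec j)))"

text \<open>Action of P on Fourier coefficients: (Pu)^(k) = sum_j p^(k - j, j) u^(j).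
  For 2 pi Z^n periodic u this is what the regularized oscillatory integral
  (2 pi)^(-n) int e^(i<x-y,xi>) p(x,xi) u(y) dy dxi gives.\<close>
definition opP :: "((complex ^ 'n::finite) \<Rightarrow> (complex ^ 'n) \<Rightarrow> complex) \<Rightarrow> (int ^ 'n \<Rightarrow> complex) \<Rightarrow> int ^ 'n \<Rightarrow> complex" where
  "opP p u k = (\<Sum>\<^sub>\<infinity>j. symc p (k - j) j * u j)"

definition L2T :: "(int ^ 'n::finite \<Rightarrow> complex) \<Rightarrow> bool" where
  "L2T u \<longleftrightarrow> (\<lambda>k. (cmod (u k))\<^sup>2) summable_on UNIV"

definition Adelta :: "real \<Rightarrow> (int ^ 'n::finite \<Rightarrow> complex) \<Rightarrow> bool" where
  "Adelta \<delta> u \<longleftrightarrow> L2T u \<and> (\<lambda>k. (cmod (u k))\<^sup>2 * exp (4 * lnorm k * \<delta>)) summable_on UNIV"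

text \<open>Self-adjointness of P on L^2(T^n): <Pu, v> = <u, Pv> (Parseval).\<close>
definition selfadjP :: "((complex ^ 'n::finite) \<Rightarrow> (complex ^ 'n) \<Rightarrow> complex) \<Rightarrow> bool" where
  "selfadjP p \<longleftrightarrow> (\<forall>u v. L2T u \<and> L2T v \<longrightarrow> L2T (opP p u) \<and>
      (\<Sum>\<^sub>\<infinity>k. opP p u k * cnj (v k)) = (\<Sum>\<^sub>\<infinity>k. u k * cnj (opP p v k)))"

end

theory Submission
  imports Defs "HOL-Complex_Analysis.Complex_Analysis"
begin

definition l2 :: "('i \<Rightarrow> complex) \<Rightarrow> bool" where
  "l2 x \<longleftrightarrow> (\<lambda>k. (cmod (x k))\<^sup>2) summable_on UNIV"

definition nn :: "('i \<Rightarrow> complex) \<Rightarrow> real" where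
  "nn x = infsum (\<lambda>k. (cmod (x k))\<^sup>2) UNIV"

lemma nn_nonneg: "nn x \<ge> 0"
  unfolding nn_def by (rule infsum_nonneg) simp

lemma sum_le_nn: "l2 x \<Longrightarrow> finite F \<Longrightarrow> (\<Sum>k\<in>F. (cmod (x k))\<^sup>2) \<le> nn x"
  unfolding l2_def nn_def by (rule finite_sum_le_infsum) auto

lemma l2_bound:
  assumes "\<And>F. finite F \<Longrightarrow> (\<Sum>k\<in>F. (cmod (x k))\<^sup>2) \<le> B"
  shows "l2 x \<and> nn x \<le> B"
proof -
  have s: "l2 x" unfolding l2_def
    by (rule nonneg_bdd_above_summable_on) (auto intro!: bdd_aboveI2 assms)
  moreover have "nn x \<le> B" unfolding nn_def
    by (rule infsum_le_finite_sums) (use s assms in \<open>auto simp: l2_def\<close>)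
  ultimately show ?thesis by blast
qed

lemma point_le_nn: "l2 x \<Longrightarrow> (cmod (x k))\<^sup>2 \<le> nn x"
  using sum_le_nn[of x "{k}"] by simp

lemma point_le_sqrt_nn: "l2 x \<Longrightarrow> cmod (x k) \<le> sqrt (nn x)"
  using point_le_nn[of x k] by (simp add: real_le_rsqrt)

lemma l2_add_tri:
  assumes x: "l2 x" and y: "l2 y"
  shows "l2 (\<lambda>k. x k + y k) \<and> sqrt (nn (\<lambda>k. x k + y k)) \<le> sqrt (nn x) + sqrt (nn y)"
proof -
  have "(\<Sum>k\<in>F. (cmod (x k + y k))\<^sup>2) \<le> (sqrt (nn x) + sqrt (nn y))\<^sup>2" if F: "finite F" for F
  proof -
    have "L2_set (\<lambda>k. cmod (x k + y k)) F \<le> L2_set (\<lambda>k. cmod (x k) + cmod (y k)) F"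
      by (rule L2_set_mono) (auto intro: norm_triangle_ineq)
    also have "\<dots> \<le> L2_set (\<lambda>k. cmod (x k)) F + L2_set (\<lambda>k. cmod (y k)) F"
      by (rule L2_set_triangle_ineq)
    also have "L2_set (\<lambda>k. cmod (x k)) F \<le> sqrt (nn x)"
      unfolding L2_set_def using sum_le_nn[OF x F] by simp
    also have "L2_set (\<lambda>k. cmod (y k)) F \<le> sqrt (nn y)"
      unfolding L2_set_def using sum_le_nn[OF y F] by simp
    finally have "sqrt (\<Sum>k\<in>F. (cmod (x k + y k))\<^sup>2) \<le> sqrt (nn x) + sqrt (nn y)"
      unfolding L2_set_def by simp
    then have "(sqrt (\<Sum>k\<in>F. (cmod (x k + y k))\<^sup>2))\<^sup>2 \<le> (sqrt (nn x) + sqrt (nn y))\<^sup>2"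
      by (rule power_mono) (auto intro!: sum_nonneg)
    moreover have "0 \<le> (\<Sum>k\<in>F. (cmod (x k + y k))\<^sup>2)" by (rule sum_nonneg) simp
    ultimately show ?thesis by simp
  qed
  from l2_bound[OF this] have "l2 (\<lambda>k. x k + y k)" "nn (\<lambda>k. x k + y k) \<le> (sqrt (nn x) + sqrt (nn y))\<^sup>2"
    by auto
  then show ?thesis
    by (simp add: real_le_lsqrt nn_nonneg)
qed

lemma l2_scale:
  assumes x: "l2 x"
  shows "l2 (\<lambda>k. c * x k)" "nn (\<lambda>k. c * x k) = (cmod c)\<^sup>2 * nn x"
    "sqrt (nn (\<lambda>k. c * x k)) = cmod c * sqrt (nn x)"
proof -
  have e: "(\<lambda>k. (cmod (c * x k))\<^sup>2) = (\<lambda>k. (cmod c)\<^sup>2 * (cmod (x k))\<^sup>2)"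
    by (simp add: norm_mult power_mult_distrib)
  show "l2 (\<lambda>k. c * x k)" using x unfolding l2_def e by (rule summable_on_cmult_right)
  show n: "nn (\<lambda>k. c * x k) = (cmod c)\<^sup>2 * nn x" unfolding nn_def e
    by (rule infsum_cmult_right') 
  show "sqrt (nn (\<lambda>k. c * x k)) = cmod c * sqrt (nn x)"
    unfolding n by (simp add: real_sqrt_mult)
qed

lemma l2_add: "l2 x \<Longrightarrow> l2 y \<Longrightarrow> l2 (\<lambda>k. x k + y k)"
  using l2_add_tri by blast

lemma l2_diff: assumes "l2 x" "l2 y" shows "l2 (\<lambda>k. x k - y k)"
proof -
  have "l2 (\<lambda>k. x k + (-1) * y k)" using assms l2_add l2_scale by blast
  then show ?thesis by simp
qed

lemma nn_cong: "(\<And>k. x k = y k) \<Longrightarrow> nn x = nn y"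
  by (metis ext)

definition Aop :: "('i \<Rightarrow> 'i \<Rightarrow> complex) \<Rightarrow> ('i \<Rightarrow> complex) \<Rightarrow> 'i \<Rightarrow> complex" where
  "Aop A x k = infsum (\<lambda>j. A k j * x j) UNIV"

lemma infsum_finite_sum_swap:
  fixes f :: "'k \<Rightarrow> 'j \<Rightarrow> real"
  assumes "finite F" "\<And>k. k \<in> F \<Longrightarrow> f k summable_on A"
  shows "(\<lambda>j. \<Sum>k\<in>F. f k j) summable_on A \<and> infsum (\<lambda>j. \<Sum>k\<in>F. f k j) A = (\<Sum>k\<in>F. infsum (f k) A)"
  using assms
proof (induction F rule: finite_induct)
  case empty then show ?case by simp
next
  case (insert k F)
  then have s1: "f k summable_on A" and s2: "(\<lambda>j. \<Sum>k\<in>F. f k j) summable_on A"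
    and e: "infsum (\<lambda>j. \<Sum>k\<in>F. f k j) A = (\<Sum>k\<in>F. infsum (f k) A)" by auto
  show ?case using insert.hyps summable_on_add[OF s1 s2] infsum_add[OF s1 s2] e by simp
qed

lemma shift_summable:
  fixes a :: "'i::ab_group_add \<Rightarrow> real"
  assumes "a summable_on UNIV"
  shows "(\<lambda>j. a (k - j)) summable_on UNIV" "infsum (\<lambda>j. a (k - j)) UNIV = infsum a UNIV"
    "(\<lambda>k. a (k - j)) summable_on UNIV" "infsum (\<lambda>k. a (k - j)) UNIV = infsum a UNIV"
proof -
  have i1: "inj (\<lambda>j::'i. k - j)" by (auto intro: injI)
  have u1: "range (\<lambda>j::'i. k - j) = UNIV"
    by (auto intro!: image_eqI[where x="k - _"])
  have i2: "inj (\<lambda>k::'i. k - j)" by (auto intro: injI)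
  have u2: "range (\<lambda>k::'i. k - j) = UNIV"
    by (auto intro!: image_eqI[where x="_ + j"])
  show "(\<lambda>j. a (k - j)) summable_on UNIV"
    using summable_on_reindex[OF i1, of a] assms u1 by (simp add: o_def)
  show "infsum (\<lambda>j. a (k - j)) UNIV = infsum a UNIV"
    using infsum_reindex[OF i1, of a] u1 by (simp add: o_def)
  show "(\<lambda>k. a (k - j)) summable_on UNIV"
    using summable_on_reindex[OF i2, of a] assms u2 by (simp add: o_def)
  show "infsum (\<lambda>k. a (k - j)) UNIV = infsum a UNIV"
    using infsum_reindex[OF i2, of a] u2 by (simp add: o_def)
qed

locale kern =
  fixes A :: "'i::ab_group_add \<Rightarrow> 'i \<Rightarrow> complex" and a :: "'i \<Rightarrow> real"
  assumes a0: "\<And>m. a m \<ge> 0" and asum: "a summable_on UNIV"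
    and AB: "\<And>k j. cmod (A k j) \<le> a (k - j)"
begin

definition "S = infsum a UNIV"

lemma S_nonneg: "S \<ge> 0" unfolding S_def by (rule infsum_nonneg) (simp add: a0)

lemma a_le_S: "a m \<le> S"
  using finite_sum_le_infsum[OF asum, of "{m}"] a0 unfolding S_def by simp

lemma row_partial: "finite F \<Longrightarrow> (\<Sum>k\<in>F. a (k - j)) \<le> S"
  using finite_sum_le_infsum[OF shift_summable(3)[OF asum, of j], of F] a0 shift_summable(4)[OF asum, of j]
  unfolding S_def by simp

context
  fixes x :: "'i \<Rightarrow> complex" assumes x: "l2 x"
begin

lemma sx: "(\<lambda>j. (cmod (x j))\<^sup>2) summable_on UNIV" using x unfolding l2_def .

lemma T_summable: "(\<lambda>j. a (k - j) * (cmod (x j))\<^sup>2) summable_on UNIV"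
  by (rule summable_on_comparison_test[OF summable_on_cmult_right[OF sx, of S]])
     (auto intro: mult_right_mono a_le_S simp: a0)

lemma R_summable: "(\<lambda>j. a (k - j) * cmod (x j)) summable_on UNIV"
proof (rule summable_on_comparison_test[OF summable_on_add[OF shift_summable(1)[OF asum, of k] T_summable[of k]]])
  fix j
  have "0 \<le> (cmod (x j) - 1)\<^sup>2" by simp
  then have "2 * cmod (x j) \<le> 1 + (cmod (x j))\<^sup>2" by (simp add: power2_diff)
  then have "cmod (x j) \<le> 1 + (cmod (x j))\<^sup>2" using norm_ge_zero[of "x j"] by linarith
  then have "a (k - j) * cmod (x j) \<le> a (k - j) * (1 + (cmod (x j))\<^sup>2)"
    by (rule mult_left_mono) (simp add: a0)
  then show "a (k - j) * cmod (x j) \<le> a (k - j) + a (k - j) * (cmod (x j))\<^sup>2"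
    by (simp add: algebra_simps)
  show "0 \<le> a (k - j) * cmod (x j)" by (simp add: a0)
qed

lemma row_abs_summable: "(\<lambda>j. norm (A k j * x j)) summable_on UNIV"
  by (rule summable_on_comparison_test[OF R_summable[of k]])
     (auto simp: norm_mult intro: mult_right_mono AB)

lemma row_summable: "(\<lambda>j. A k j * x j) summable_on UNIV"
  by (rule abs_summable_summable[OF row_abs_summable])

lemma Aop_bound1: "cmod (Aop A x k) \<le> infsum (\<lambda>j. a (k - j) * cmod (x j)) UNIV"
proof -
  have "cmod (Aop A x k) \<le> infsum (\<lambda>j. cmod (A k j * x j)) UNIV"
    unfolding Aop_def by (rule norm_infsum_bound[OF row_abs_summable])
  also have "\<dots> \<le> infsum (\<lambda>j. a (k - j) * cmod (x j)) UNIV"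
    by (rule infsum_mono[OF row_abs_summable R_summable])
       (auto simp: norm_mult intro: mult_right_mono AB)
  finally show ?thesis .
qed

lemma R_CS: "(infsum (\<lambda>j. a (k - j) * cmod (x j)) UNIV)\<^sup>2
   \<le> S * infsum (\<lambda>j. a (k - j) * (cmod (x j))\<^sup>2) UNIV"
proof -
  define T where "T = infsum (\<lambda>j. a (k - j) * (cmod (x j))\<^sup>2) UNIV"
  have T0: "T \<ge> 0" unfolding T_def by (rule infsum_nonneg) (simp add: a0)
  have "infsum (\<lambda>j. a (k - j) * cmod (x j)) UNIV \<le> sqrt (S * T)"
  proof (rule infsum_le_finite_sums[OF R_summable])
    fix F :: "'i set" assume F: "finite F"
    have "(\<Sum>j\<in>F. a (k - j) * cmod (x j))\<^sup>2
        = (\<Sum>j\<in>F. sqrt (a (k - j)) * (sqrt (a (k - j)) * cmod (x j)))\<^sup>2"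
      by (intro arg_cong[where f="\<lambda>t. t\<^sup>2"] sum.cong) (auto simp: a0 mult.assoc[symmetric])
    also have "\<dots> \<le> (\<Sum>j\<in>F. (sqrt (a (k - j)))\<^sup>2) * (\<Sum>j\<in>F. (sqrt (a (k - j)) * cmod (x j))\<^sup>2)"
      by (rule Cauchy_Schwarz_ineq_sum)
    also have "\<dots> = (\<Sum>j\<in>F. a (k - j)) * (\<Sum>j\<in>F. a (k - j) * (cmod (x j))\<^sup>2)"
      by (simp add: a0 power_mult_distrib)
    also have "\<dots> \<le> S * T"
    proof (rule mult_mono)
      show "(\<Sum>j\<in>F. a (k - j)) \<le> S"
        using finite_sum_le_infsum[OF shift_summable(1)[OF asum, of k] F] shift_summable(2)[OF asum, of k] a0
        unfolding S_def by simp
      show "(\<Sum>j\<in>F. a (k - j) * (cmod (x j))\<^sup>2) \<le> T"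
        unfolding T_def by (rule finite_sum_le_infsum[OF T_summable F]) (auto simp: a0)
    qed (auto simp: S_nonneg a0 intro: sum_nonneg)
    finally show "(\<Sum>j\<in>F. a (k - j) * cmod (x j)) \<le> sqrt (S * T)"
      by (rule real_le_rsqrt)
  qed
  moreover have "0 \<le> infsum (\<lambda>j. a (k - j) * cmod (x j)) UNIV"
    by (rule infsum_nonneg) (simp add: a0)
  ultimately have "(infsum (\<lambda>j. a (k - j) * cmod (x j)) UNIV)\<^sup>2 \<le> (sqrt (S * T))\<^sup>2"
    by (rule power_mono)
  also have "\<dots> = S * T" using S_nonneg T0 by simp
  finally show ?thesis unfolding T_def .
qed

lemma Aop_sq: "(cmod (Aop A x k))\<^sup>2 \<le> S * infsum (\<lambda>j. a (k - j) * (cmod (x j))\<^sup>2) UNIV"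
proof -
  have "(cmod (Aop A x k))\<^sup>2 \<le> (infsum (\<lambda>j. a (k - j) * cmod (x j)) UNIV)\<^sup>2"
    by (rule power_mono[OF Aop_bound1]) simp
  then show ?thesis using R_CS[of k] by linarith
qed

lemma Aop_l2: "l2 (Aop A x) \<and> nn (Aop A x) \<le> S\<^sup>2 * nn x"
proof (rule l2_bound)
  fix F :: "'i set" assume F: "finite F"
  have sw: "(\<lambda>j. \<Sum>k\<in>F. a (k - j) * (cmod (x j))\<^sup>2) summable_on UNIV \<and>
     infsum (\<lambda>j. \<Sum>k\<in>F. a (k - j) * (cmod (x j))\<^sup>2) UNIV
       = (\<Sum>k\<in>F. infsum (\<lambda>j. a (k - j) * (cmod (x j))\<^sup>2) UNIV)"
    by (rule infsum_finite_sum_swap[OF F]) (rule T_summable)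
  have "(\<Sum>k\<in>F. (cmod (Aop A x k))\<^sup>2) \<le> (\<Sum>k\<in>F. S * infsum (\<lambda>j. a (k - j) * (cmod (x j))\<^sup>2) UNIV)"
    by (rule sum_mono) (rule Aop_sq)
  also have "\<dots> = S * infsum (\<lambda>j. \<Sum>k\<in>F. a (k - j) * (cmod (x j))\<^sup>2) UNIV"
    using sw by (simp add: sum_distrib_left)
  also have "\<dots> \<le> S * infsum (\<lambda>j. S * (cmod (x j))\<^sup>2) UNIV"
  proof (rule mult_left_mono[OF _ S_nonneg], rule infsum_mono)
    show "(\<lambda>j. \<Sum>k\<in>F. a (k - j) * (cmod (x j))\<^sup>2) summable_on UNIV" using sw by blast
    show "(\<lambda>j. S * (cmod (x j))\<^sup>2) summable_on UNIV" by (rule summable_on_cmult_right[OF sx])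
    fix j
    have "(\<Sum>k\<in>F. a (k - j) * (cmod (x j))\<^sup>2) = (\<Sum>k\<in>F. a (k - j)) * (cmod (x j))\<^sup>2"
      by (simp add: sum_distrib_right)
    also have "\<dots> \<le> S * (cmod (x j))\<^sup>2"
      by (rule mult_right_mono[OF row_partial[OF F]]) simp
    finally show "(\<Sum>k\<in>F. a (k - j) * (cmod (x j))\<^sup>2) \<le> S * (cmod (x j))\<^sup>2" .
  qed
  also have "\<dots> = S\<^sup>2 * nn x"
    unfolding nn_def by (simp add: infsum_cmult_right' power2_eq_square)
  finally show "(\<Sum>k\<in>F. (cmod (Aop A x k))\<^sup>2) \<le> S\<^sup>2 * nn x" .
qed

lemma Aop_norm: "sqrt (nn (Aop A x)) \<le> S * sqrt (nn x)"
proof -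
  have "sqrt (nn (Aop A x)) \<le> sqrt (S\<^sup>2 * nn x)" using Aop_l2 by simp
  also have "\<dots> = S * sqrt (nn x)" using S_nonneg by (simp add: real_sqrt_mult)
  finally show ?thesis .
qed

end

lemma Aop_diff:
  assumes "l2 x" "l2 y"
  shows "Aop A (\<lambda>j. x j - y j) k = Aop A x k - Aop A y k"
proof -
  have "Aop A (\<lambda>j. x j - y j) k = infsum (\<lambda>j. A k j * x j + - (A k j * y j)) UNIV"
    unfolding Aop_def by (simp add: algebra_simps)
  also have "\<dots> = Aop A x k + - Aop A y k"
    unfolding Aop_def
    by (subst infsum_add) (auto simp: infsum_uminus summable_on_uminus row_summable assms)
  finally show ?thesis by simp
qed

lemma Aop_scale: "Aop A (\<lambda>j. c * x j) k = c * Aop A x k"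
  unfolding Aop_def by (simp add: infsum_cmult_right'[symmetric] algebra_simps)

end

lemma l2_limit:
  fixes x :: "nat \<Rightarrow> 'i \<Rightarrow> complex"
  assumes xl: "\<And>N. l2 (x N)"
    and xd: "\<And>N. sqrt (nn (\<lambda>k. x (Suc N) k - x N k)) \<le> C * r ^ N"
    and r: "0 \<le> r" "r < 1"
  shows "\<exists>y. l2 y \<and> (\<forall>N. sqrt (nn (\<lambda>k. y k - x N k)) \<le> C * r ^ N / (1 - r)) \<and> (\<forall>k. (\<lambda>N. x N k) \<longlonglongrightarrow> y k)"
proof -
  have C0: "C \<ge> 0" using xd[of 0] real_sqrt_ge_zero[OF nn_nonneg] by (metis order_trans power_0 mult_1_right)
  have pd: "cmod (x (Suc N) k - x N k) \<le> C * r ^ N" for N k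
    using point_le_sqrt_nn[OF l2_diff[OF xl[of "Suc N"] xl[of N]], of k] xd[of N] by linarith
  have conv: "convergent (\<lambda>N. x N k)" for k
  proof -
    have "summable (\<lambda>N. C * r ^ N)" using r by (intro summable_mult summable_geometric) auto
    then have s: "summable (\<lambda>N. x (Suc N) k - x N k)"
      by (rule summable_comparison_test'[where N=0]) (use pd in auto)
    have "(\<lambda>N. x 0 k + (\<Sum>i<N. x (Suc i) k - x i k)) \<longlonglongrightarrow> x 0 k + suminf (\<lambda>N. x (Suc N) k - x N k)"
      by (intro tendsto_add tendsto_const summable_LIMSEQ[OF s])
    moreover have "(\<Sum>i<N. x (Suc i) k - x i k) = x N k - x 0 k" for N
      by (rule sum_lessThan_telescope[of "\<lambda>i. x i k"])
    ultimately show ?thesis unfolding convergent_def by auto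
  qed
  define y where "y k = lim (\<lambda>N. x N k)" for k
  have lim: "(\<lambda>N. x N k) \<longlonglongrightarrow> y k" for k
    unfolding y_def using conv convergent_LIMSEQ_iff by blast
  have bd: "sqrt (nn (\<lambda>k. x (N + d) k - x N k)) \<le> C * r ^ N * (1 - r ^ d) / (1 - r)" for N d
  proof (induction d)
    case 0 then show ?case by (simp add: nn_def)
  next
    case (Suc d)
    have "sqrt (nn (\<lambda>k. x (N + Suc d) k - x N k))
        = sqrt (nn (\<lambda>k. (x (Suc (N + d)) k - x (N + d) k) + (x (N + d) k - x N k)))" by simp
    also have "\<dots> \<le> sqrt (nn (\<lambda>k. x (Suc (N + d)) k - x (N + d) k)) + sqrt (nn (\<lambda>k. x (N + d) k - x N k))"
      using l2_add_tri[OF l2_diff[OF xl xl] l2_diff[OF xl xl]] by blast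
    also have "\<dots> \<le> C * r ^ (N + d) + C * r ^ N * (1 - r ^ d) / (1 - r)"
      using xd[of "N + d"] Suc.IH by linarith
    also have "\<dots> = C * r ^ N * (1 - r ^ Suc d) / (1 - r)"
      using r by (simp add: field_simps power_add)
    finally show ?case .
  qed
  have bd2: "sqrt (nn (\<lambda>k. x (N + d) k - x N k)) \<le> C * r ^ N / (1 - r)" for N d
  proof -
    have "C * r ^ N * (1 - r ^ d) / (1 - r) \<le> C * r ^ N / (1 - r)"
    proof (rule divide_right_mono)
      have "C * r ^ N * (1 - r ^ d) \<le> C * r ^ N * 1"
        by (rule mult_left_mono) (use r C0 in auto)
      then show "C * r ^ N * (1 - r ^ d) \<le> C * r ^ N" by simp
    qed (use r in auto)
    then show ?thesis using bd[of N d] by linarith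
  qed
  have yN: "l2 (\<lambda>k. y k - x N k) \<and> nn (\<lambda>k. y k - x N k) \<le> (C * r ^ N / (1 - r))\<^sup>2" for N
  proof (rule l2_bound)
    fix F :: "'i set" assume F: "finite F"
    have t: "(\<lambda>d. \<Sum>k\<in>F. (cmod (x (d + N) k - x N k))\<^sup>2) \<longlonglongrightarrow> (\<Sum>k\<in>F. (cmod (y k - x N k))\<^sup>2)"
      by (intro tendsto_intros LIMSEQ_ignore_initial_segment lim)
    show "(\<Sum>k\<in>F. (cmod (y k - x N k))\<^sup>2) \<le> (C * r ^ N / (1 - r))\<^sup>2"
    proof (rule LIMSEQ_le_const2[OF t], intro exI allI impI)
      fix d
      have "(\<Sum>k\<in>F. (cmod (x (d + N) k - x N k))\<^sup>2) \<le> nn (\<lambda>k. x (N + d) k - x N k)"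
        using sum_le_nn[OF l2_diff[OF xl xl] F, of "N + d" N] by (simp add: add.commute)
      also have "\<dots> = (sqrt (nn (\<lambda>k. x (N + d) k - x N k)))\<^sup>2"
        using nn_nonneg[of "\<lambda>k. x (N + d) k - x N k"] by simp
      also have "\<dots> \<le> (C * r ^ N / (1 - r))\<^sup>2"
        by (rule power_mono[OF bd2]) (rule real_sqrt_ge_zero[OF nn_nonneg])
      finally show "(\<Sum>k\<in>F. (cmod (x (d + N) k - x N k))\<^sup>2) \<le> (C * r ^ N / (1 - r))\<^sup>2" .
    qed
  qed
  have "l2 y"
  proof -
    have "l2 (\<lambda>k. (y k - x 0 k) + x 0 k)" using yN[of 0] xl[of 0] by (intro l2_add) auto
    then show ?thesis by simp
  qed
  moreover have "sqrt (nn (\<lambda>k. y k - x N k)) \<le> C * r ^ N / (1 - r)" for N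
  proof -
    have "sqrt (nn (\<lambda>k. y k - x N k)) \<le> sqrt ((C * r ^ N / (1 - r))\<^sup>2)"
      using yN[of N] real_sqrt_le_mono by blast
    also have "\<dots> = C * r ^ N / (1 - r)" using C0 r by simp
    finally show ?thesis .
  qed
  ultimately show ?thesis using lim by blast
qed

context kern
begin

lemma solve:
  assumes om: "S < cmod \<omega>" and g: "l2 g"
  shows "\<exists>y. l2 y \<and> (\<forall>k. Aop A y k - \<omega> * y k = g k)"
proof -
  have om0: "\<omega> \<noteq> 0" using om S_nonneg by auto
  define r where "r = S / cmod \<omega>"
  have r: "0 \<le> r" "r < 1" using om S_nonneg om0 unfolding r_def by auto
  define h where "h k = - g k / \<omega>" for k
  have hl: "l2 h" using l2_scale(1)[OF g, of "- 1 / \<omega>"] unfolding h_def by simp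
  define x where "x = rec_nat h (\<lambda>N xN k. h k + (1 / \<omega>) * Aop A xN k)"
  have x0: "x 0 = h" and xS: "x (Suc N) = (\<lambda>k. h k + (1 / \<omega>) * Aop A (x N) k)" for N
    unfolding x_def by simp_all
  have xl: "l2 (x N)" for N
  proof (induction N)
    case 0 then show ?case using hl x0 by simp
  next
    case (Suc N)
    show ?case unfolding xS
      by (rule l2_add[OF hl l2_scale(1)[OF conjunct1[OF Aop_l2[OF Suc]]]])
  qed
  have step: "sqrt (nn (\<lambda>k. x (Suc (Suc N)) k - x (Suc N) k)) \<le> r * sqrt (nn (\<lambda>k. x (Suc N) k - x N k))" for N
  proof -
    have "x (Suc (Suc N)) k - x (Suc N) k = (1 / \<omega>) * Aop A (\<lambda>j. x (Suc N) j - x N j) k" for k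
    proof -
      have a1: "x (Suc (Suc N)) k = h k + (1 / \<omega>) * Aop A (x (Suc N)) k" by (simp only: xS[of "Suc N"])
      have a2: "x (Suc N) k = h k + (1 / \<omega>) * Aop A (x N) k" by (simp only: xS)
      show ?thesis unfolding a1 a2 Aop_diff[OF xl xl] by (simp add: algebra_simps)
    qed
    then have "(\<lambda>k. x (Suc (Suc N)) k - x (Suc N) k) = (\<lambda>k. (1 / \<omega>) * Aop A (\<lambda>j. x (Suc N) j - x N j) k)"
      by auto
    then have "sqrt (nn (\<lambda>k. x (Suc (Suc N)) k - x (Suc N) k))
       = sqrt (nn (\<lambda>k. (1 / \<omega>) * Aop A (\<lambda>j. x (Suc N) j - x N j) k))"
      by (rule arg_cong[where f="\<lambda>z. sqrt (nn z)"])
    also have "\<dots> = cmod (1 / \<omega>) * sqrt (nn (Aop A (\<lambda>j. x (Suc N) j - x N j)))"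
      by (rule l2_scale(3)[OF conjunct1[OF Aop_l2[OF l2_diff[OF xl xl]]]])
    also have "\<dots> \<le> cmod (1 / \<omega>) * (S * sqrt (nn (\<lambda>j. x (Suc N) j - x N j)))"
      by (rule mult_left_mono[OF Aop_norm[OF l2_diff[OF xl xl]]]) simp
    also have "\<dots> = r * sqrt (nn (\<lambda>k. x (Suc N) k - x N k))"
      unfolding r_def by (simp add: norm_divide)
    finally show ?thesis .
  qed
  define C where "C = sqrt (nn (\<lambda>k. x (Suc 0) k - x 0 k))"
  have xd: "sqrt (nn (\<lambda>k. x (Suc N) k - x N k)) \<le> C * r ^ N" for N
  proof (induction N)
    case 0 then show ?case unfolding C_def by simp
  next
    case (Suc N)
    have "sqrt (nn (\<lambda>k. x (Suc (Suc N)) k - x (Suc N) k)) \<le> r * (C * r ^ N)"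
      using step[of N] mult_left_mono[OF Suc.IH r(1)] by linarith
    then show ?case by (simp add: algebra_simps)
  qed
  obtain y where yl: "l2 y" and yb: "\<And>N. sqrt (nn (\<lambda>k. y k - x N k)) \<le> C * r ^ N / (1 - r)"
    and ylim: "\<And>k. (\<lambda>N. x N k) \<longlonglongrightarrow> y k"
    using l2_limit[OF xl xd r] by blast
  have eq: "y k = h k + (1 / \<omega>) * Aop A y k" for k
  proof -
    have "(\<lambda>N. C * r ^ N / (1 - r)) \<longlonglongrightarrow> C * 0 / (1 - r)"
      using r by (intro tendsto_intros LIMSEQ_power_zero) auto
    then have z: "(\<lambda>N. S * (C * r ^ N / (1 - r))) \<longlonglongrightarrow> 0"
      using tendsto_mult_right_zero by force
    have "(\<lambda>N. Aop A y k - Aop A (x N) k) \<longlonglongrightarrow> 0"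
    proof (rule Lim_null_comparison[OF _ z], rule always_eventually, rule allI)
      fix N
      have "cmod (Aop A y k - Aop A (x N) k) = cmod (Aop A (\<lambda>j. y j - x N j) k)"
        by (simp add: Aop_diff[OF yl xl])
      also have "\<dots> \<le> sqrt (nn (Aop A (\<lambda>j. y j - x N j)))"
        by (rule point_le_sqrt_nn[OF conjunct1[OF Aop_l2[OF l2_diff[OF yl xl]]]])
      also have "\<dots> \<le> S * sqrt (nn (\<lambda>j. y j - x N j))"
        by (rule Aop_norm[OF l2_diff[OF yl xl]])
      also have "\<dots> \<le> S * (C * r ^ N / (1 - r))"
        by (rule mult_left_mono[OF yb S_nonneg])
      finally show "norm (Aop A y k - Aop A (x N) k) \<le> S * (C * r ^ N / (1 - r))" by simp
    qed
    then have "(\<lambda>N. Aop A (x N) k) \<longlonglongrightarrow> Aop A y k"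
      using Lim_null tendsto_diff[OF tendsto_const[of "Aop A y k"], of "\<lambda>N. Aop A y k - Aop A (x N) k" 0 sequentially]
      by simp
    then have "(\<lambda>N. x (Suc N) k) \<longlonglongrightarrow> h k + (1 / \<omega>) * Aop A y k"
      unfolding xS by (intro tendsto_intros)
    moreover have "(\<lambda>N. x (Suc N) k) \<longlonglongrightarrow> y k"
      using ylim[of k] by (rule LIMSEQ_Suc)
    ultimately show ?thesis using LIMSEQ_unique by blast
  qed
  have "Aop A y k - \<omega> * y k = g k" for k
  proof -
    have "\<omega> * y k = \<omega> * h k + Aop A y k" using eq[of k] om0 by (simp add: algebra_simps)
    then show ?thesis unfolding h_def using om0 by (simp add: algebra_simps)
  qed
  then show ?thesis using yl by blast
qed

lemma unique0:
  assumes om: "S < cmod \<omega>" and x: "l2 x" and e: "\<And>k. Aop A x k - \<omega> * x k = 0"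
  shows "x k = 0"
proof -
  have "(\<lambda>k. \<omega> * x k) = Aop A x" using e by (auto simp: algebra_simps)
  then have "cmod \<omega> * sqrt (nn x) = sqrt (nn (Aop A x))"
    using l2_scale(3)[OF x, of \<omega>] by simp
  also have "\<dots> \<le> S * sqrt (nn x)" by (rule Aop_norm[OF x])
  finally have "(cmod \<omega> - S) * sqrt (nn x) \<le> 0" by (simp add: algebra_simps)
  then have "sqrt (nn x) \<le> 0" using om by (simp add: mult_le_0_iff)
  then have "cmod (x k) \<le> 0" using point_le_sqrt_nn[OF x, of k] by linarith
  then show ?thesis by simp
qed

end

lemma param_holo:
  fixes \<psi> :: "'x::euclidean_space \<Rightarrow> complex \<Rightarrow> complex"
  assumes S: "open S"
    and holo: "\<And>x. x \<in> cbox lo hi \<Longrightarrow> \<psi> x holomorphic_on S"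
    and bnd: "\<And>x w. x \<in> cbox lo hi \<Longrightarrow> w \<in> S \<Longrightarrow> cmod (\<psi> x w) \<le> B"
    and int: "\<And>w. w \<in> S \<Longrightarrow> (\<lambda>x. \<psi> x w) integrable_on cbox lo hi"
    and B0: "B \<ge> 0"
  shows "(\<lambda>w. integral (cbox lo hi) (\<lambda>x. \<psi> x w)) holomorphic_on S"
  unfolding holomorphic_on_def
proof
  fix w0 assume w0: "w0 \<in> S"
  obtain e where e: "e > 0" "ball w0 e \<subseteq> S" using S w0 openE by blast
  define r where "r = e / 3"
  have r: "r > 0" using e unfolding r_def by simp
  define K where "K = 2 * (B + 1) / r\<^sup>2"
  have cb: "cball w0 r \<subseteq> S" using e r unfolding r_def by (intro order_trans[OF _ e(2)]) auto
  have d2: "cmod (deriv (deriv (\<psi> x)) z) \<le> K" if x: "x \<in> cbox lo hi" and z: "z \<in> cball w0 r" for x z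
  proof -
    have bz: "ball z r \<subseteq> S" using z e unfolding r_def
      by (intro order_trans[OF _ e(2)]) (auto simp: subset_eq dist_commute intro: dist_triangle_lt[where z=z] order_le_less_trans)
    have cbz: "cball z r \<subseteq> S" using z e unfolding r_def
      by (intro order_trans[OF _ e(2)]) (auto simp: subset_eq dist_commute intro: dist_triangle_lt[where z=z] order_le_less_trans)
    have "cmod ((deriv ^^ 2) (\<psi> x) z) \<le> fact 2 * (B + 1) / r ^ 2"
    proof (rule Cauchy_higher_deriv_bound)
      show "\<psi> x holomorphic_on ball z r" using holo[OF x] bz by (rule holomorphic_on_subset)
      show "continuous_on (cball z r) (\<psi> x)"
        using holomorphic_on_imp_continuous_on[OF holo[OF x]] cbz by (rule continuous_on_subset)
      show "\<psi> x w \<in> ball 0 (B + 1)" if "w \<in> ball z r" for w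
        using bnd[OF x] bz that by (force simp: dist_norm)
    qed (use r in auto)
    then show ?thesis unfolding K_def by (simp add: numeral_2_eq_2)
  qed
  have dd: "(deriv (\<psi> x) has_field_derivative deriv (deriv (\<psi> x)) z) (at z within T)"
    if x: "x \<in> cbox lo hi" and z: "z \<in> S" for x z T
    by (rule holomorphic_derivI[OF holomorphic_deriv[OF holo[OF x] S] S z])
  have d1: "(\<psi> x has_field_derivative deriv (\<psi> x) z) (at z within T)"
    if x: "x \<in> cbox lo hi" and z: "z \<in> S" for x z T
    by (rule holomorphic_derivI[OF holo[OF x] S z])
  have stepA: "cmod (deriv (\<psi> x) z - deriv (\<psi> x) w0) \<le> K * cmod (z - w0)"
    if x: "x \<in> cbox lo hi" and z: "z \<in> cball w0 r" for x z
    using field_differentiable_bound[OF convex_cball, of w0 r "deriv (\<psi> x)" "\<lambda>z. deriv (deriv (\<psi> x)) z" K z w0]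
      dd[OF x] d2[OF x] cb z r by (auto simp: subset_eq)
  have stepB: "cmod (\<psi> x z - \<psi> x w0 - deriv (\<psi> x) w0 * (z - w0)) \<le> K * (cmod (z - w0))\<^sup>2"
    if x: "x \<in> cbox lo hi" and z: "z \<in> cball w0 r" for x z
  proof -
    have seg: "closed_segment w0 z \<subseteq> cball w0 r"
      using z r by (intro closed_segment_subset) (auto simp: convex_cball)
    have "cmod ((\<psi> x z - deriv (\<psi> x) w0 * z) - (\<psi> x w0 - deriv (\<psi> x) w0 * w0)) \<le> (K * cmod (z - w0)) * cmod (z - w0)"
    proof (rule field_differentiable_bound[OF convex_closed_segment, of w0 z "\<lambda>v. \<psi> x v - deriv (\<psi> x) w0 * v"
          "\<lambda>v. deriv (\<psi> x) v - deriv (\<psi> x) w0"])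
      fix v assume v: "v \<in> closed_segment w0 z"
      then have vS: "v \<in> S" using seg cb by auto
      show "((\<lambda>v. \<psi> x v - deriv (\<psi> x) w0 * v) has_field_derivative deriv (\<psi> x) v - deriv (\<psi> x) w0)
          (at v within closed_segment w0 z)"
        by (rule derivative_eq_intros d1[OF x vS] | simp)+
      have "cmod (deriv (\<psi> x) v - deriv (\<psi> x) w0) \<le> K * cmod (v - w0)"
        using stepA[OF x] v seg by auto
      also have "\<dots> \<le> K * cmod (z - w0)"
      proof (rule mult_left_mono)
        show "cmod (v - w0) \<le> cmod (z - w0)"
          using dist_in_closed_segment[OF v] by (simp add: dist_norm norm_minus_commute)
        show "0 \<le> K" unfolding K_def using B0 by simp
      qed
      finally show "cmod (deriv (\<psi> x) v - deriv (\<psi> x) w0) \<le> K * cmod (z - w0)" .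
    qed auto
    then show ?thesis by (simp add: algebra_simps power2_eq_square)
  qed
  have K0: "K \<ge> 0" unfolding K_def using B0 by simp
  define D where "D x = deriv (\<psi> x) w0" for x
  have Dint: "D integrable_on cbox lo hi"
  proof (rule integrable_uniform_limit)
    fix \<epsilon> :: real assume ep: "\<epsilon> > 0"
    define t where "t = min r (\<epsilon> / (K + 1))"
    have t: "t > 0" "t \<le> r" using r ep K0 unfolding t_def by auto
    have Kt: "K * t \<le> \<epsilon>"
    proof -
      have "K * t \<le> K * (\<epsilon> / (K + 1))" using K0 unfolding t_def by (intro mult_left_mono) auto
      also have "\<dots> \<le> \<epsilon>" using K0 ep by (simp add: field_simps)
      finally show ?thesis .
    qed
    have wt: "w0 + of_real t \<in> cball w0 r" using t by (simp add: dist_norm)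
    define g where "g x = (\<psi> x (w0 + of_real t) - \<psi> x w0) * (1 / of_real t)" for x
    have "g integrable_on cbox lo hi" unfolding g_def
      by (rule has_integral_integrable[OF has_integral_mult_left[OF has_integral_diff[OF
            integrable_integral[OF int] integrable_integral[OF int]]]]) (use wt cb w0 in auto)
    moreover have "norm (D x - g x) \<le> \<epsilon>" if x: "x \<in> cbox lo hi" for x
    proof -
      have "D x - g x = - (\<psi> x (w0 + of_real t) - \<psi> x w0 - deriv (\<psi> x) w0 * ((w0 + of_real t) - w0)) / of_real t"
        unfolding D_def g_def using t by (simp add: field_simps)
      then have "norm (D x - g x) = cmod (\<psi> x (w0 + of_real t) - \<psi> x w0 - deriv (\<psi> x) w0 * ((w0 + of_real t) - w0)) / t"
        using t by (simp only: norm_divide norm_minus_cancel norm_of_real)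
      also have "\<dots> \<le> K * (cmod ((w0 + of_real t) - w0))\<^sup>2 / t"
        by (rule divide_right_mono[OF stepB[OF x wt]]) (use t in auto)
      also have "\<dots> = K * t" using t by (simp add: power2_eq_square)
      finally show ?thesis using Kt by linarith
    qed
    ultimately show "\<exists>g. (\<forall>x\<in>cbox lo hi. norm (D x - g x) \<le> \<epsilon>) \<and> g integrable_on cbox lo hi" by blast
  qed
  define I where "I w = integral (cbox lo hi) (\<lambda>x. \<psi> x w)" for w
  define c where "c = Henstock_Kurzweil_Integration.content (cbox lo hi)"
  have bound: "cmod ((I y - I w0) / (y - w0) - integral (cbox lo hi) D) \<le> K * c * cmod (y - w0)"
    if y: "y \<in> ball w0 r" "y \<noteq> w0" for y
  proof -
    have yS: "y \<in> S" using y cb by auto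
    have hi: "((\<lambda>x. \<psi> x y - \<psi> x w0 - D x * (y - w0)) has_integral (I y - I w0 - integral (cbox lo hi) D * (y - w0))) (cbox lo hi)"
      unfolding I_def
      by (intro has_integral_diff has_integral_mult_left integrable_integral int Dint yS w0)
    have "cmod (I y - I w0 - integral (cbox lo hi) D * (y - w0)) \<le> K * (cmod (y - w0))\<^sup>2 * c"
      unfolding c_def
      by (rule has_integral_bound[OF _ hi]) (use K0 stepB y in \<open>auto simp: D_def\<close>)
    moreover have "(I y - I w0) / (y - w0) - integral (cbox lo hi) D = (I y - I w0 - integral (cbox lo hi) D * (y - w0)) / (y - w0)"
      using y by (simp add: field_simps)
    ultimately have "cmod ((I y - I w0) / (y - w0) - integral (cbox lo hi) D) \<le> K * (cmod (y - w0))\<^sup>2 * c / cmod (y - w0)"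
      by (simp add: norm_divide divide_right_mono)
    also have "\<dots> = K * c * cmod (y - w0)" using y by (simp add: power2_eq_square)
    finally show ?thesis .
  qed
  have "(I has_field_derivative integral (cbox lo hi) D) (at w0)"
    unfolding has_field_derivative_iff
  proof (rule LIM_zero_cancel, rule Lim_null_comparison)
    show "\<forall>\<^sub>F y in at w0. norm ((I y - I w0) / (y - w0) - integral (cbox lo hi) D) \<le> K * c * cmod (y - w0)"
      unfolding eventually_at using r bound by (auto simp: dist_norm norm_minus_commute intro!: exI[of _ r])
    have "((\<lambda>y. y - w0) \<longlongrightarrow> 0) (at w0)" by (rule LIM_zero[OF tendsto_ident_at])
    then show "((\<lambda>y. K * c * cmod (y - w0)) \<longlongrightarrow> 0) (at w0)"
      by (intro tendsto_mult_right_zero tendsto_norm_zero)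
  qed
  then show "(\<lambda>w. integral (cbox lo hi) (\<lambda>x. \<psi> x w)) field_differentiable at w0 within S"
    unfolding I_def field_differentiable_def using has_field_derivative_at_within by blast
qed

lemma norm_axis_gen: "norm (axis i (c::'a::real_normed_vector) :: 'a ^ 'n::finite) = norm c"
proof -
  have "(\<Sum>l\<in>UNIV. (norm (axis i c $ l))\<^sup>2) = (\<Sum>l\<in>UNIV. if l = i then (norm c)\<^sup>2 else 0)"
    by (rule sum.cong) (auto simp: axis_def)
  also have "\<dots> = (norm c)\<^sup>2" by simp
  finally show ?thesis unfolding norm_vec_def L2_set_def by simp
qed

lemma bounded_linear_axis: "bounded_linear (axis i :: 'a::real_normed_vector \<Rightarrow> 'a ^ 'n::finite)"
proof (rule bounded_linear_intro[where K=1])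
  show "axis i (x + y) = (axis i x + axis i y :: 'a ^ 'n)" for x y :: 'a by (auto simp: axis_def vec_eq_iff)
  show "axis i (r *\<^sub>R x) = (r *\<^sub>R axis i x :: 'a ^ 'n)" for r and x :: 'a by (auto simp: axis_def vec_eq_iff)
  show "norm (axis i x :: 'a ^ 'n) \<le> norm x * 1" for x by (simp add: norm_axis_gen)
qed

lemma open_strip: "open {w::complex. \<bar>Im w\<bar> < c}"
  by (rule open_Collect_less) (auto intro!: continuous_intros)

lemma convex_strip: "convex {w::complex. \<bar>Im w\<bar> < c}"
proof -
  have e: "{w::complex. \<bar>Im w\<bar> < c} = {w. Im w < c} \<inter> {w. Im w > - c}" by auto
  show ?thesis unfolding e by (rule convex_Int[OF convex_halfspace_Im_lt convex_halfspace_Im_gt])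
qed

lemma cvec_cont: "continuous_on UNIV (cvec :: real ^ 'n::finite \<Rightarrow> complex ^ 'n)"
  unfolding cvec_def by (intro continuous_intros continuous_on_vec_lambda)

locale symb =
  fixes p :: "complex ^ 'n::finite \<Rightarrow> complex ^ 'n \<Rightarrow> complex"
    and a b C0 :: real and U :: "((complex ^ 'n) \<times> (complex ^ 'n)) set"
  assumes ab: "a > 0" "b > 0"
    and Ureg: "symb_region a b \<subseteq> U" and hol: "holo2 p U"
    and bound: "\<And>z \<zeta>. (z, \<zeta>) \<in> symb_region a b \<Longrightarrow> cmod (p z \<zeta>) \<le> C0"
    and periodic: "\<And>(x :: real ^ 'n) (\<xi> :: real ^ 'n) (k :: int ^ 'n).
        p (cvec (x + (2 * pi) *\<^sub>R ivec k)) (cvec \<xi>) = p (cvec x) (cvec \<xi>)"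
begin

lemma vIm_line: "vIm (cvec x + axis i w) = axis i (Im w)"
  by (auto simp: vIm_def cvec_def axis_def vec_eq_iff)

lemma vIm_cvec: "vIm (cvec x) = 0"
  by (auto simp: vIm_def cvec_def vec_eq_iff)

lemma jbr_nonneg: "jbr v \<ge> 0" unfolding jbr_def by simp

lemma reg: "\<bar>Im w\<bar> \<le> a \<Longrightarrow> (cvec x + axis i w, cvec \<xi>) \<in> symb_region a b"
  unfolding symb_region_def using ab jbr_nonneg[of "vRe (cvec \<xi>)"]
  by (auto simp: vIm_line vIm_cvec norm_axis_gen)

lemma C0_nonneg: "C0 \<ge> 0"
  using bound[OF reg[of 0 0 undefined 0]] ab by (auto intro: order_trans[OF norm_ge_zero])

lemma openU: "open U" using hol unfolding holo2_def by blast

lemma deriv_at: "w \<in> U \<Longrightarrow> \<exists>D. ((\<lambda>(z, \<zeta>). p z \<zeta>) has_derivative D) (at w) \<and>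
      (\<forall>h1 h2. D (\<i> *s h1, \<i> *s h2) = \<i> * D (h1, h2))"
  using hol unfolding holo2_def by blast

lemma holo_line:
  "(\<lambda>w. p (cvec x + axis i w) (cvec \<xi>)) holomorphic_on {w. \<bar>Im w\<bar> < a}"
  unfolding holomorphic_on_def
proof
  fix w :: complex assume w: "w \<in> {w. \<bar>Im w\<bar> < a}"
  have pt: "(cvec x + axis i w, cvec \<xi>) \<in> U" using reg[of w x i \<xi>] w Ureg by auto
  obtain D where hD: "((\<lambda>(z, \<zeta>). p z \<zeta>) has_derivative D) (at (cvec x + axis i w, cvec \<xi>))"
    and hom: "\<And>h1 h2. D (\<i> *s h1, \<i> *s h2) = \<i> * D (h1, h2)"
    using deriv_at[OF pt] by blast
  have lin: "linear D" using has_derivative_bounded_linear[OF hD] bounded_linear.linear by blast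
  have g: "((\<lambda>w. (cvec x + axis i w, cvec \<xi>)) has_derivative (\<lambda>\<eta>. (axis i \<eta>, 0))) (at w)"
  proof -
    have ax: "((axis i :: complex \<Rightarrow> complex ^ 'n) has_derivative axis i) (at w)"
      by (rule bounded_linear_imp_has_derivative) (rule bounded_linear_axis)
    have "((\<lambda>w. (cvec x + axis i w, cvec \<xi>)) has_derivative (\<lambda>h. (0 + axis i h, 0))) (at w)"
      by (intro has_derivative_Pair has_derivative_add has_derivative_const ax)
    then show ?thesis by simp
  qed
  have c: "(((\<lambda>(z, \<zeta>). p z \<zeta>) \<circ> (\<lambda>w. (cvec x + axis i w, cvec \<xi>))) has_derivative (D \<circ> (\<lambda>\<eta>. (axis i \<eta>, 0)))) (at w)"
    by (rule diff_chain_at[OF g]) (use hD in simp)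
  define d where "d = D (axis i 1, 0)"
  have eqD: "(D \<circ> (\<lambda>\<eta>. (axis i \<eta>, 0))) = (\<lambda>\<eta>. d * \<eta>)"
  proof
    fix \<eta> :: complex
    have split: "(axis i \<eta>, 0 :: complex ^ 'n) = Re \<eta> *\<^sub>R (axis i 1, 0) + Im \<eta> *\<^sub>R (axis i \<i>, 0)"
      by (auto simp: vec_eq_iff axis_def complex_eq_iff)
    have ii: "(axis i \<i>, 0 :: complex ^ 'n) = (\<i> *s axis i 1, \<i> *s 0)"
      by (auto simp: vec_eq_iff axis_def)
    have "D (axis i \<eta>, 0) = Re \<eta> *\<^sub>R D (axis i 1, 0) + Im \<eta> *\<^sub>R D (axis i \<i>, 0)"
      unfolding split by (simp only: linear_add[OF lin] linear_scale[OF lin])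
    also have "D (axis i \<i>, 0) = \<i> * d" unfolding ii hom d_def ..
    finally have "D (axis i \<eta>, 0) = (of_real (Re \<eta>) + \<i> * of_real (Im \<eta>)) * d"
      by (simp add: d_def scaleR_conv_of_real algebra_simps)
    also have "of_real (Re \<eta>) + \<i> * of_real (Im \<eta>) = \<eta>" by (simp add: complex_eq_iff)
    finally show "(D \<circ> (\<lambda>\<eta>. (axis i \<eta>, 0))) \<eta> = d * \<eta>" by (simp add: mult.commute)
  qed
  have "((\<lambda>w. p (cvec x + axis i w) (cvec \<xi>)) has_field_derivative d) (at w)"
    unfolding has_field_derivative_def using c unfolding eqD by (simp add: o_def)
  then show "(\<lambda>w. p (cvec x + axis i w) (cvec \<xi>)) field_differentiable at w within {w. \<bar>Im w\<bar> < a}"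
    unfolding field_differentiable_def using has_field_derivative_at_within by blast
qed

lemma cont_line:
  assumes "\<bar>Im w\<bar> \<le> a"
  shows "continuous_on UNIV (\<lambda>x. p (cvec x + axis i w) (cvec \<xi>))"
proof -
  have "isCont (\<lambda>x. p (cvec x + axis i w) (cvec \<xi>)) x" for x
  proof -
    have pt: "(cvec x + axis i w, cvec \<xi>) \<in> U" using reg[of w x i \<xi>] assms Ureg by auto
    obtain D where hD: "((\<lambda>(z, \<zeta>). p z \<zeta>) has_derivative D) (at (cvec x + axis i w, cvec \<xi>))"
      using deriv_at[OF pt] by blast
    have c1: "isCont (\<lambda>(z, \<zeta>). p z \<zeta>) (cvec x + axis i w, cvec \<xi>)"
      by (rule has_derivative_continuous[OF hD])
    have c2: "isCont (\<lambda>x. (cvec x + axis i w, cvec \<xi>)) x"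
      using cvec_cont by (intro continuous_intros) (auto simp: continuous_on_eq_continuous_at)
    show ?thesis using continuous_at_compose[OF c2 c1] by (simp add: o_def)
  qed
  then show ?thesis by (simp add: continuous_on_eq_continuous_at)
qed

end

lemma transl:
  fixes F :: "'a::euclidean_space \<Rightarrow> 'b::real_normed_vector"
  assumes "(F has_integral I) (cbox a b)"
  shows "((\<lambda>x. F (x + c)) has_integral I) {x. x + c \<in> cbox a b}"
proof -
  have im: "(\<lambda>x. x - c) ` cbox a b = {x. x + c \<in> cbox a b}"
    by (auto intro!: image_eqI[where x="_ + c"])
  from has_integral_affinity[OF assms, of 1 c] show ?thesis
    by (simp add: im[symmetric] algebra_simps)
qed

lemma box_transl: "{x::real^'n::finite. x + c \<in> cbox lo hi} = cbox (lo - c) (hi - c)"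
  by (auto simp: mem_box_cart algebra_simps)

lemma box_cut_le:
  assumes "c \<le> T"
  shows "cbox 0 (\<chi> l. T) \<inter> {x::real^'n::finite. x $ i \<le> c} = cbox 0 (\<chi> l. if l = i then c else T)"
proof (rule set_eqI, rule iffI)
  fix x :: "real ^ 'n"
  assume "x \<in> cbox 0 (\<chi> l. T) \<inter> {x. x $ i \<le> c}"
  then show "x \<in> cbox 0 (\<chi> l. if l = i then c else T)" by (auto simp: mem_box_cart)
next
  fix x :: "real ^ 'n"
  assume "x \<in> cbox 0 (\<chi> l. if l = i then c else T)"
  then have H: "\<forall>l. 0 \<le> x $ l \<and> x $ l \<le> (if l = i then c else T)" by (simp add: mem_box_cart)
  have "0 \<le> x $ l \<and> x $ l \<le> T" for l using H[rule_format, of l] assms by (cases "l = i") auto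
  moreover have "x $ i \<le> c" using H[rule_format, of i] by simp
  ultimately show "x \<in> cbox 0 (\<chi> l. T) \<inter> {x. x $ i \<le> c}" by (simp add: mem_box_cart)
qed

lemma box_cut_ge:
  assumes "0 \<le> c"
  shows "cbox 0 (\<chi> l. T) \<inter> {x::real^'n::finite. x $ i \<ge> c} = cbox (\<chi> l. if l = i then c else 0) (\<chi> l. T)"
proof (rule set_eqI, rule iffI)
  fix x :: "real ^ 'n"
  assume "x \<in> cbox 0 (\<chi> l. T) \<inter> {x. x $ i \<ge> c}"
  then show "x \<in> cbox (\<chi> l. if l = i then c else 0) (\<chi> l. T)" by (auto simp: mem_box_cart)
next
  fix x :: "real ^ 'n"
  assume "x \<in> cbox (\<chi> l. if l = i then c else 0) (\<chi> l. T)"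
  then have H: "\<forall>l. (if l = i then c else 0) \<le> x $ l \<and> x $ l \<le> T" by (simp add: mem_box_cart)
  have "0 \<le> x $ l \<and> x $ l \<le> T" for l using H[rule_format, of l] assms by (cases "l = i") auto
  moreover have "x $ i \<ge> c" using H[rule_format, of i] by simp
  ultimately show "x \<in> cbox 0 (\<chi> l. T) \<inter> {x. x $ i \<ge> c}" by (simp add: mem_box_cart)
qed

lemma transl_inv:
  fixes F :: "real ^ 'n::finite \<Rightarrow> complex" and T s :: real
  assumes cont: "continuous_on UNIV F"
    and per: "\<And>y. F (y + T *\<^sub>R axis i 1) = F y"
    and s: "0 \<le> s" "s \<le> T"
  shows "integral (cbox 0 (\<chi> l. T)) (\<lambda>x. F (x + s *\<^sub>R axis i 1)) = integral (cbox 0 (\<chi> l. T)) F"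
proof -
  define e :: "real ^ 'n" where "e = axis i 1"
  have eB: "e \<in> Basis" unfolding e_def by simp
  have ie: "{x. x \<bullet> e \<le> c} = {x. x $ i \<le> c}" "{x. x \<bullet> e \<ge> c} = {x. x $ i \<ge> c}" for c
    unfolding e_def by (simp_all add: inner_axis)
  have ec: "e $ l = (if l = i then 1 else 0)" for l unfolding e_def by (simp add: axis_def)
  define B1 :: "(real ^ 'n) set" where "B1 = cbox (\<chi> l. if l = i then s else 0) (\<chi> l. T)"
  define B2 :: "(real ^ 'n) set" where "B2 = cbox 0 (\<chi> l. if l = i then s else T)"
  have int: "(F has_integral integral (cbox u v) F) (cbox u v)" for u v
    by (rule integrable_integral, rule integrable_continuous, rule continuous_on_subset[OF cont]) auto
  have v1: "(\<chi> l. if l = i then s else 0) - s *\<^sub>R e = 0" "(\<chi> l. T) - s *\<^sub>R e = (\<chi> l. if l = i then T - s else T)"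
    "0 - (s - T) *\<^sub>R e = (\<chi> l. if l = i then T - s else 0)" "(\<chi> l. if l = i then s else T) - (s - T) *\<^sub>R e = (\<chi> l. T)"
    by (auto simp: vec_eq_iff ec)
  have h1: "((\<lambda>x. F (x + s *\<^sub>R e)) has_integral integral B1 F) (cbox 0 (\<chi> l. if l = i then T - s else T))"
    using transl[OF int[of "\<chi> l. if l = i then s else 0" "\<chi> l. T"], of "s *\<^sub>R e"] unfolding B1_def box_transl v1 .
  have h2: "((\<lambda>x. F (x + (s - T) *\<^sub>R e)) has_integral integral B2 F) (cbox (\<chi> l. if l = i then T - s else 0) (\<chi> l. T))"
    using transl[OF int[of 0 "\<chi> l. if l = i then s else T"], of "(s - T) *\<^sub>R e"] unfolding B2_def box_transl v1 .
  have per': "F (x + (s - T) *\<^sub>R e) = F (x + s *\<^sub>R e)" for x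
  proof -
    have "F (x + (s - T) *\<^sub>R e) = F ((x + (s - T) *\<^sub>R e) + T *\<^sub>R axis i 1)" using per by simp
    also have "(x + (s - T) *\<^sub>R e) + T *\<^sub>R axis i 1 = x + s *\<^sub>R e" unfolding e_def by (simp add: algebra_simps)
    finally show ?thesis .
  qed
  have Ts1: "T - s \<le> T" and Ts2: "0 \<le> T - s" using s by auto
  have A: "((\<lambda>x. F (x + s *\<^sub>R e)) has_integral (integral B1 F + integral B2 F)) (cbox 0 (\<chi> l. T))"
  proof (rule has_integral_split[OF _ _ eB, where c="T - s"])
    show "((\<lambda>x. F (x + s *\<^sub>R e)) has_integral integral B1 F) (cbox 0 (\<chi> l. T) \<inter> {x. x \<bullet> e \<le> T - s})"
      unfolding ie box_cut_le[of "T - s" T i, OF Ts1] by (rule h1)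
    show "((\<lambda>x. F (x + s *\<^sub>R e)) has_integral integral B2 F) (cbox 0 (\<chi> l. T) \<inter> {x. T - s \<le> x \<bullet> e})"
      unfolding ie box_cut_ge[of "T - s" T i, OF Ts2] using h2 unfolding per' .
  qed
  have B: "(F has_integral (integral B2 F + integral B1 F)) (cbox 0 (\<chi> l. T))"
  proof (rule has_integral_split[OF _ _ eB, where c=s])
    show "(F has_integral integral B2 F) (cbox 0 (\<chi> l. T) \<inter> {x. x \<bullet> e \<le> s})"
      unfolding ie box_cut_le[of s T i, OF s(2)] B2_def by (rule int)
    show "(F has_integral integral B1 F) (cbox 0 (\<chi> l. T) \<inter> {x. s \<le> x \<bullet> e})"
      unfolding ie box_cut_ge[of s T i, OF s(1)] B1_def by (rule int)
  qed
  show ?thesis using integral_unique[OF A] integral_unique[OF B] unfolding e_def by (simp add: add.commute)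
qed

lemma axis_zero: "axis i (0::'a::zero) = (0 :: 'a ^ 'n::finite)"
  by (simp add: axis_def vec_eq_iff)

lemma exp_2pi_int: "exp (2 * of_int k * of_real pi * \<i>) = 1"
  using exp_integer_2pi[of "of_int k"] by simp

context symb
begin

lemma decay1:
  fixes m j :: "int ^ 'n" and i :: 'n
  shows "cmod (symc p m j) \<le> C0 * Henstock_Kurzweil_Integration.content (tcube :: (real ^ 'n) set) / (2 * pi) ^ CARD('n)
            * exp (- (a / 2) * \<bar>real_of_int (m $ i)\<bar>)"
proof -
  define \<xi> where "\<xi> = ivec j"
  define T :: real where "T = 2 * pi"
  define mi where "mi = real_of_int (m $ i)"
  define F where "F y = exp (- \<i> * of_real (ivec m \<bullet> y)) * p (cvec y) (cvec \<xi>)" for y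
  define \<psi> where "\<psi> x w = exp (- \<i> * (of_real (ivec m \<bullet> x) + of_real mi * w)) * p (cvec x + axis i w) (cvec \<xi>)" for x w
  define G where "G w = integral tcube (\<lambda>x. \<psi> x w)" for w
  define Sa where "Sa = {w::complex. \<bar>Im w\<bar> < a}"
  have ivi: "ivec m \<bullet> (y + c *\<^sub>R axis i 1) = ivec m \<bullet> y + c * mi" for y c
    by (simp add: inner_add_right inner_axis ivec_def mi_def)
  have contF: "continuous_on UNIV F"
    unfolding F_def using cont_line[of 0 i \<xi>] ab
    by (intro continuous_intros) (auto simp: axis_zero)
  have perF: "F (y + T *\<^sub>R axis i 1) = F y" for y
  proof -
    have e: "- \<i> * of_real (ivec m \<bullet> (y + T *\<^sub>R axis i 1)) = - \<i> * of_real (ivec m \<bullet> y) + 2 * of_int (- (m $ i)) * of_real pi * \<i>"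
      unfolding ivi T_def mi_def by (simp add: algebra_simps)
    have k: "(2 * pi) *\<^sub>R ivec (axis i 1 :: int ^ 'n) = T *\<^sub>R axis i 1"
      unfolding T_def by (simp add: ivec_def axis_def vec_eq_iff)
    have "p (cvec (y + T *\<^sub>R axis i 1)) (cvec \<xi>) = p (cvec y) (cvec \<xi>)"
      using periodic[of y "axis i 1" \<xi>] unfolding k .
    then show ?thesis unfolding F_def e exp_add exp_2pi_int by simp
  qed
  have psi_real: "\<psi> x (of_real s) = F (x + s *\<^sub>R axis i 1)" for x s
  proof -
    have "cvec (x + s *\<^sub>R axis i 1) = cvec x + axis i (of_real s)"
      by (simp add: cvec_def axis_def vec_eq_iff)
    then show ?thesis unfolding \<psi>_def F_def ivi by (simp add: mult.commute)
  qed
  have G0F: "G 0 = integral tcube F"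
    unfolding G_def using psi_real[of _ 0] by simp
  have Greal: "G (of_real s) = G 0" if s: "0 \<le> s" "s \<le> T" for s
  proof -
    have "G (of_real s) = integral (cbox 0 (\<chi> l. T)) (\<lambda>x. F (x + s *\<^sub>R axis i 1))"
      unfolding G_def psi_real tcube_def T_def ..
    also have "\<dots> = integral (cbox 0 (\<chi> l. T)) F"
      by (rule transl_inv[OF contF perF s])
    finally show ?thesis unfolding G0F tcube_def T_def .
  qed
  have C0: "C0 \<ge> 0" by (rule C0_nonneg)
  have psi_bound: "cmod (\<psi> x w) \<le> exp (mi * Im w) * C0" if "\<bar>Im w\<bar> \<le> a" for x w
  proof -
    have "cmod (\<psi> x w) = exp (mi * Im w) * cmod (p (cvec x + axis i w) (cvec \<xi>))"
      unfolding \<psi>_def by (simp add: norm_mult)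
    also have "\<dots> \<le> exp (mi * Im w) * C0"
      by (rule mult_left_mono[OF bound[OF reg[OF that]]]) simp
    finally show ?thesis .
  qed
  have psi_cont: "continuous_on UNIV (\<lambda>x. \<psi> x w)" if "\<bar>Im w\<bar> \<le> a" for w
    unfolding \<psi>_def using cont_line[OF that, of i \<xi>] by (intro continuous_intros) auto
  have holoG: "G holomorphic_on Sa"
    unfolding G_def[abs_def] tcube_def
  proof (rule param_holo[where B="exp (\<bar>mi\<bar> * a) * C0"])
    show "open Sa" unfolding Sa_def by (rule open_strip)
    show "\<psi> x holomorphic_on Sa" for x
      unfolding \<psi>_def[abs_def] Sa_def by (intro holomorphic_intros holo_line)
    show "cmod (\<psi> x w) \<le> exp (\<bar>mi\<bar> * a) * C0" if "w \<in> Sa" for x w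
    proof -
      have w: "\<bar>Im w\<bar> \<le> a" using that unfolding Sa_def by simp
      have "mi * Im w \<le> \<bar>mi * Im w\<bar>" by (rule abs_ge_self)
      also have "\<dots> = \<bar>mi\<bar> * \<bar>Im w\<bar>" by (rule abs_mult)
      also have "\<dots> \<le> \<bar>mi\<bar> * a" using w by (intro mult_left_mono) auto
      finally have "mi * Im w \<le> \<bar>mi\<bar> * a" .
      then have "exp (mi * Im w) * C0 \<le> exp (\<bar>mi\<bar> * a) * C0" using C0 by (intro mult_right_mono) auto
      then show ?thesis using psi_bound[OF w, of x] by linarith
    qed
    show "(\<lambda>x. \<psi> x w) integrable_on cbox 0 (\<chi> l. 2 * pi)" if "w \<in> Sa" for w
      using that unfolding Sa_def
      by (intro integrable_continuous continuous_on_subset[OF psi_cont]) auto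
    show "0 \<le> exp (\<bar>mi\<bar> * a) * C0" using C0 by simp
  qed
  define w1 where "w1 = - \<i> * of_real ((if mi \<ge> 0 then 1 else -1) * (a / 2))"
  have Imw1: "Im w1 = - (if mi \<ge> 0 then 1 else -1) * (a / 2)" unfolding w1_def by simp
  have w1S: "w1 \<in> Sa" unfolding Sa_def using ab Imw1 by auto
  have Gw1: "G w1 = G 0"
  proof -
    have "G w1 - G 0 = 0"
    proof (rule analytic_continuation[of "\<lambda>w. G w - G 0" Sa "of_real ` {0..T}" "of_real pi"])
      show "(\<lambda>w. G w - G 0) holomorphic_on Sa" by (intro holomorphic_intros holoG)
      show "open Sa" unfolding Sa_def by (rule open_strip)
      show "connected Sa" unfolding Sa_def by (rule convex_connected[OF convex_strip])
      show "of_real ` {0..T} \<subseteq> Sa" unfolding Sa_def using ab by auto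
      show "complex_of_real pi \<in> Sa" unfolding Sa_def using ab by simp
      show "complex_of_real pi islimpt complex_of_real ` {0..T}"
        unfolding islimpt_approachable
      proof (intro allI impI)
        fix e :: real assume e: "e > 0"
        define t where "t = pi + min (e / 2) pi"
        have mp: "min (e / 2) pi > 0" using e pi_gt_zero by (auto simp: min_def)
        have "t \<in> {0..T}" unfolding t_def T_def using e pi_gt_zero by auto
        moreover have "complex_of_real t \<noteq> complex_of_real pi"
        proof -
          have "t \<noteq> pi" unfolding t_def using mp by linarith
          then show ?thesis by simp
        qed
        moreover have "dist (complex_of_real t) (complex_of_real pi) < e"
          unfolding t_def dist_complex_def using e pi_gt_zero by (auto simp flip: of_real_diff)
        ultimately show "\<exists>x'\<in>complex_of_real ` {0..T}. x' \<noteq> complex_of_real pi \<and> dist x' (complex_of_real pi) < e"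
          by blast
      qed
      show "\<And>z. z \<in> complex_of_real ` {0..T} \<Longrightarrow> G z - G 0 = 0" using Greal by auto
      show "w1 \<in> Sa" by (rule w1S)
    qed
    then show ?thesis by simp
  qed
  have bw1: "cmod (\<psi> x w1) \<le> exp (- (a / 2) * \<bar>mi\<bar>) * C0" for x
  proof -
    have "\<bar>Im w1\<bar> \<le> a" unfolding Imw1 using ab by auto
    moreover have "mi * Im w1 = - (a / 2) * \<bar>mi\<bar>" unfolding Imw1 by auto
    ultimately show ?thesis using psi_bound[of w1 x] by simp
  qed
  have bnd: "cmod (G w1) \<le> exp (- (a / 2) * \<bar>mi\<bar>) * C0 * Henstock_Kurzweil_Integration.content (tcube :: (real ^ 'n) set)"
    unfolding G_def tcube_def
    by (rule has_integral_bound[OF _ integrable_integral bw1])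
       (use C0 w1S in \<open>auto simp: Sa_def intro!: integrable_continuous continuous_on_subset[OF psi_cont]\<close>)
  have eq0: "symc p m j = complex_of_real (1 / (2 * pi) ^ CARD('n)) * G 0"
    unfolding symc_def G_def \<psi>_def \<xi>_def by (simp add: axis_zero)
  have eq: "symc p m j = complex_of_real (1 / (2 * pi) ^ CARD('n)) * G w1"
    unfolding eq0 Gw1 ..
  have "cmod (symc p m j) = (1 / (2 * pi) ^ CARD('n)) * cmod (G w1)"
    unfolding eq norm_mult norm_of_real by simp
  also have "\<dots> \<le> (1 / (2 * pi) ^ CARD('n)) * (exp (- (a / 2) * \<bar>mi\<bar>) * C0 * Henstock_Kurzweil_Integration.content (tcube :: (real ^ 'n) set))"
    by (rule mult_left_mono[OF bnd]) simp
  also have "\<dots> = C0 * Henstock_Kurzweil_Integration.content (tcube :: (real ^ 'n) set) / (2 * pi) ^ CARD('n)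
            * exp (- (a / 2) * \<bar>real_of_int (m $ i)\<bar>)"
    unfolding mi_def by (simp add: field_simps)
  finally show ?thesis .
qed

end

lemma exp_int_summable:
  fixes c :: real assumes c: "c > 0"
  shows "(\<lambda>r::int. exp (- c * \<bar>real_of_int r\<bar>)) summable_on UNIV"
proof -
  have gs: "(\<lambda>n::nat. exp (- c * real n)) summable_on UNIV"
  proof -
    have "summable (\<lambda>n::nat. (exp (- c)) ^ n)" using c by (intro summable_geometric) auto
    then have "summable (\<lambda>n::nat. exp (- c * real n))" by (simp add: exp_of_nat_mult[symmetric] mult.commute)
    then show ?thesis by (subst summable_on_UNIV_nonneg_real_iff) auto
  qed
  have i1: "inj (int :: nat \<Rightarrow> int)" by (rule injI) simp
  have i2: "inj (\<lambda>n::nat. - int n - 1)" by (rule injI) simp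
  have s1: "(\<lambda>r::int. exp (- c * \<bar>real_of_int r\<bar>)) summable_on (range int)"
    unfolding summable_on_reindex[OF i1] o_def using gs by simp
  have s2: "(\<lambda>r::int. exp (- c * \<bar>real_of_int r\<bar>)) summable_on (range (\<lambda>n::nat. - int n - 1))"
    unfolding summable_on_reindex[OF i2] o_def
  proof (rule summable_on_comparison_test[OF gs])
    fix n :: nat
    have "\<bar>real_of_int (- int n - 1)\<bar> = real n + 1" by simp
    then show "exp (- c * \<bar>real_of_int (- int n - 1)\<bar>) \<le> exp (- c * real n)" using c by simp
  qed simp
  have "(\<lambda>r::int. exp (- c * \<bar>real_of_int r\<bar>)) summable_on (range int \<union> range (\<lambda>n::nat. - int n - 1))"
    by (rule summable_on_Un_disjoint[OF s1 s2]) auto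
  moreover have "range int \<union> range (\<lambda>n::nat. - int n - 1) = UNIV"
  proof -
    have "r \<in> range int \<union> range (\<lambda>n::nat. - int n - 1)" for r :: int
    proof (cases "r \<ge> 0")
      case True then show ?thesis by (auto intro!: image_eqI[where x="nat r"])
    next
      case False then show ?thesis by (auto intro!: image_eqI[where x="nat (- r - 1)"])
    qed
    then show ?thesis by auto
  qed
  ultimately show ?thesis by simp
qed

lemma prod_vec_summable:
  fixes g :: "int \<Rightarrow> real"
  assumes g0: "\<And>r. g r \<ge> 0" and gs: "g summable_on UNIV"
  shows "(\<lambda>m::int ^ 'n::finite. \<Prod>i\<in>UNIV. g (m $ i)) summable_on UNIV"
proof -
  have ga: "Infinite_Set_Sum.abs_summable_on g UNIV"
    using abs_summable_equivalent[of g UNIV] gs g0 by simp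
  have pa: "Infinite_Set_Sum.abs_summable_on (\<lambda>f. \<Prod>x\<in>(UNIV::'n set). g (f x)) (PiE UNIV (\<lambda>_. UNIV))"
    by (rule abs_summable_on_prod_PiE) (use ga in auto)
  have ps: "(\<lambda>f. norm (\<Prod>x\<in>(UNIV::'n set). g (f x))) summable_on (PiE UNIV (\<lambda>_. UNIV))"
    by (rule iffD2[OF abs_summable_equivalent]) (rule pa)
  have ps': "(\<lambda>f. \<Prod>x\<in>(UNIV::'n set). g (f x)) summable_on (PiE UNIV (\<lambda>_. (UNIV :: int set)))"
    using ps g0 by (simp add: prod_nonneg)
  have inj: "inj (vec_nth :: int ^ 'n \<Rightarrow> 'n \<Rightarrow> int)" by (rule injI) (simp add: vec_nth_inject)
  have rng: "range (vec_nth :: int ^ 'n \<Rightarrow> 'n \<Rightarrow> int) = PiE UNIV (\<lambda>_. UNIV)"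
    by (auto simp: PiE_UNIV_domain intro!: image_eqI[where x="vec_lambda _"])
  show ?thesis
    using summable_on_reindex[OF inj, of "\<lambda>f. \<Prod>x\<in>(UNIV::'n set). g (f x)"] ps' unfolding rng by (simp add: o_def)
qed

definition L1 :: "int ^ 'n::finite \<Rightarrow> real" where
  "L1 m = (\<Sum>i\<in>UNIV. \<bar>real_of_int (m $ i)\<bar>)"

lemma L1_nonneg: "L1 m \<ge> 0" unfolding L1_def by (rule sum_nonneg) simp

lemma lnorm_le_L1: "lnorm m \<le> L1 m"
  using L2_set_le_sum_abs[of "\<lambda>i. real_of_int (m $ i)" UNIV] unfolding lnorm_def L1_def L2_set_def .

lemma lnorm_norm: "lnorm k = norm (ivec k)"
  by (simp add: lnorm_def norm_vec_def L2_set_def ivec_def)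

lemma lnorm_tri: "lnorm k \<le> lnorm (k - j) + lnorm j"
proof -
  have "ivec (k - j) = ivec k - ivec j" by (simp add: ivec_def vec_eq_iff)
  then show ?thesis unfolding lnorm_norm using norm_triangle_sub[of "ivec k" "ivec j"] by (simp add: add.commute)
qed

lemma L1_max: "\<exists>i0. L1 m \<le> real CARD('n) * \<bar>real_of_int (m $ i0)\<bar>" for m :: "int ^ 'n::finite"
proof -
  define f where "f i = \<bar>real_of_int (m $ i)\<bar>" for i
  define X where "X = f ` (UNIV :: 'n set)"
  have fin: "finite X" "X \<noteq> {}" unfolding X_def by auto
  have "Max X \<in> f ` UNIV" using Max_in[OF fin] unfolding X_def .
  then obtain i0 where i0: "Max X = f i0" by blast
  have "L1 m \<le> of_nat (card (UNIV :: 'n set)) * Max X"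
    unfolding L1_def by (rule sum_bounded_above) (use fin in \<open>auto simp: X_def f_def\<close>)
  then show ?thesis using i0 unfolding f_def by auto
qed

lemma exp_L1_prod: "exp (- c * L1 m) = (\<Prod>i\<in>UNIV. exp (- c * \<bar>real_of_int (m $ i)\<bar>))"
proof -
  have "- c * L1 m = (\<Sum>i\<in>UNIV. - c * \<bar>real_of_int (m $ i)\<bar>)" unfolding L1_def by (simp add: sum_distrib_left)
  then show ?thesis by (simp only:) (rule exp_sum, simp)
qed

context symb
begin

definition "Mc = C0 * Henstock_Kurzweil_Integration.content (tcube :: (real ^ 'n) set) / (2 * pi) ^ CARD('n)"

lemma Mc_nonneg: "Mc \<ge> 0"
  unfolding Mc_def using C0_nonneg by (simp add: tcube_def)

lemma decayL1: "cmod (symc p m j) \<le> Mc * exp (- (a / (2 * real CARD('n))) * L1 m)"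
proof -
  obtain i0 where i0: "L1 m \<le> real CARD('n) * \<bar>real_of_int (m $ i0)\<bar>" using L1_max by blast
  have "(a / (2 * real CARD('n))) * L1 m \<le> (a / (2 * real CARD('n))) * (real CARD('n) * \<bar>real_of_int (m $ i0)\<bar>)"
    using ab by (intro mult_left_mono[OF i0]) auto
  also have "\<dots> = (a / 2) * \<bar>real_of_int (m $ i0)\<bar>" by simp
  finally have "exp (- (a / 2) * \<bar>real_of_int (m $ i0)\<bar>) \<le> exp (- (a / (2 * real CARD('n))) * L1 m)" by simp
  then have "Mc * exp (- (a / 2) * \<bar>real_of_int (m $ i0)\<bar>) \<le> Mc * exp (- (a / (2 * real CARD('n))) * L1 m)"
    by (rule mult_left_mono) (rule Mc_nonneg)
  then show ?thesis using decay1[of m j i0] unfolding Mc_def by linarith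
qed

lemma L2T_l2: "L2T u \<longleftrightarrow> l2 u" unfolding L2T_def l2_def ..

lemma opP_Aop: "opP p u k = Aop (\<lambda>k j. symc p (k - j) j) u k" unfolding opP_def Aop_def ..

lemma main:
  "\<exists>C>0. \<exists>\<delta>>0. \<forall>\<omega>. Im \<omega> \<ge> C \<longrightarrow>
           (\<forall>f. Adelta \<delta> f \<longrightarrow>
              (\<exists>!u. L2T u \<and> (\<forall>k. opP p u k - \<omega> * u k = f k)) \<and>
              (\<forall>u. L2T u \<and> (\<forall>k. opP p u k - \<omega> * u k = f k) \<longrightarrow> Adelta \<delta> u))"
proof -
  define c where "c = a / (4 * real CARD('n))"
  have c: "c > 0" using ab by (simp add: c_def)
  define \<delta> where "\<delta> = c / 2"
  have \<delta>: "\<delta> > 0" using c by (simp add: \<delta>_def)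
  define W where "W k = exp (c * lnorm k)" for k :: "int ^ 'n"
  have lnn: "lnorm k \<ge> 0" for k :: "int ^ 'n" unfolding lnorm_def by (simp add: sum_nonneg)
  have W0: "W k > 0" for k unfolding W_def by simp
  have W1: "W k \<ge> 1" for k unfolding W_def using c lnn[of k] by simp
  have W2: "(W k)\<^sup>2 = exp (4 * lnorm k * \<delta>)" for k
    unfolding W_def \<delta>_def by (simp add: power2_eq_square exp_add[symmetric])
  define a0 where "a0 m = Mc * exp (- c * L1 m)" for m :: "int ^ 'n"
  define A0 where "A0 k j = symc p (k - j) j" for k j :: "int ^ 'n"
  define A1 where "A1 k j = symc p (k - j) j * complex_of_real (W k / W j)" for k j :: "int ^ 'n"
  have a00: "a0 m \<ge> 0" for m unfolding a0_def using Mc_nonneg by simp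
  have a0s: "a0 summable_on UNIV"
  proof -
    have "(\<lambda>m::int ^ 'n. \<Prod>i\<in>UNIV. exp (- c * \<bar>real_of_int (m $ i)\<bar>)) summable_on UNIV"
      by (rule prod_vec_summable[OF _ exp_int_summable[OF c]]) simp
    then have "(\<lambda>m::int ^ 'n. Mc * (\<Prod>i\<in>UNIV. exp (- c * \<bar>real_of_int (m $ i)\<bar>))) summable_on UNIV"
      by (rule summable_on_cmult_right)
    then show ?thesis unfolding a0_def exp_L1_prod .
  qed
  have dec2: "cmod (symc p m j) \<le> Mc * exp (- (2 * c) * L1 m)" for m j
    using decayL1[of m j] unfolding c_def by (simp add: field_simps)
  have kA0: "kern A0 a0"
  proof (unfold_locales)
    show "0 \<le> a0 m" for m by (rule a00)
    show "a0 summable_on UNIV" by (rule a0s)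
    show "cmod (A0 k j) \<le> a0 (k - j)" for k j
    proof -
      have "exp (- (2 * c) * L1 (k - j)) \<le> exp (- c * L1 (k - j))" using c L1_nonneg[of "k - j"] by simp
      then have "Mc * exp (- (2 * c) * L1 (k - j)) \<le> Mc * exp (- c * L1 (k - j))"
        by (rule mult_left_mono) (rule Mc_nonneg)
      then show ?thesis using dec2[of "k - j" j] unfolding A0_def a0_def by linarith
    qed
  qed
  have kA1: "kern A1 a0"
  proof (unfold_locales)
    show "0 \<le> a0 m" for m by (rule a00)
    show "a0 summable_on UNIV" by (rule a0s)
    show "cmod (A1 k j) \<le> a0 (k - j)" for k j
    proof -
      have "W k / W j = exp (c * (lnorm k - lnorm j))" unfolding W_def by (simp add: exp_diff[symmetric] algebra_simps)
      also have "\<dots> \<le> exp (c * L1 (k - j))"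
        using lnorm_tri[of k j] lnorm_le_L1[of "k - j"] c by (simp add: mult_left_mono)
      finally have wr: "W k / W j \<le> exp (c * L1 (k - j))" .
      have "cmod (A1 k j) = cmod (symc p (k - j) j) * (W k / W j)"
        unfolding A1_def norm_mult norm_of_real using W0[of k] W0[of j] by (simp add: abs_of_pos)
      also have "\<dots> \<le> (Mc * exp (- (2 * c) * L1 (k - j))) * exp (c * L1 (k - j))"
        by (rule mult_mono[OF dec2 wr]) (use Mc_nonneg W0[of k] W0[of j] in auto)
      also have "\<dots> = a0 (k - j)" unfolding a0_def by (simp add: mult.assoc exp_add[symmetric] algebra_simps)
      finally show ?thesis .
    qed
  qed
  define S where "S = infsum a0 UNIV"
  have S0: "S \<ge> 0" unfolding S_def by (rule infsum_nonneg) (rule a00)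
  have SA0: "kern.S a0 = S" unfolding S_def by (rule kern.S_def[OF kA0])
  show ?thesis
  proof (rule exI[of _ "S + 1"], intro conjI)
    show "S + 1 > 0" using S0 by simp
  next
    show "\<exists>\<delta>>0. \<forall>\<omega>. S + 1 \<le> Im \<omega> \<longrightarrow>
           (\<forall>f::int ^ 'n \<Rightarrow> complex. Adelta \<delta> f \<longrightarrow>
              (\<exists>!u. L2T u \<and> (\<forall>k. opP p u k - \<omega> * u k = f k)) \<and>
              (\<forall>u. L2T u \<and> (\<forall>k. opP p u k - \<omega> * u k = f k) \<longrightarrow> Adelta \<delta> u))"
  proof (rule exI[of _ \<delta>], intro conjI allI impI)
    show "\<delta> > 0" by (rule \<delta>)
    fix \<omega> :: complex and f :: "int ^ 'n \<Rightarrow> complex"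
    assume om: "S + 1 \<le> Im \<omega>" and fA: "Adelta \<delta> f"
    have omS: "S < cmod \<omega>" using om abs_Im_le_cmod[of \<omega>] by linarith
    have fL: "l2 f" and fw: "(\<lambda>k. (cmod (f k))\<^sup>2 * exp (4 * lnorm k * \<delta>)) summable_on UNIV"
      using fA unfolding Adelta_def L2T_l2 by auto
    define g where "g k = complex_of_real (W k) * f k" for k
    have gsq: "(cmod (g k))\<^sup>2 = (cmod (f k))\<^sup>2 * exp (4 * lnorm k * \<delta>)" for k
      unfolding g_def norm_mult norm_of_real W2[symmetric] using W0[of k] by (simp add: power_mult_distrib)
    have gl: "l2 g" unfolding l2_def gsq by (rule fw)
    obtain y where yl: "l2 y" and ye: "\<And>k. Aop A1 y k - \<omega> * y k = g k"
      using kern.solve[OF kA1, of \<omega> g] omS gl unfolding kern.S_def[OF kA1] S_def by blast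
    define u0 where "u0 k = y k / complex_of_real (W k)" for k
    have yu: "y k = complex_of_real (W k) * u0 k" for k unfolding u0_def using W0[of k] by simp
    have opu: "opP p u0 k = Aop A1 y k / complex_of_real (W k)" for k
    proof -
      have "Aop A1 y k = infsum (\<lambda>j. complex_of_real (W k) * (symc p (k - j) j * u0 j)) UNIV"
        unfolding Aop_def A1_def
      proof (rule infsum_cong)
        fix j
        show "symc p (k - j) j * complex_of_real (W k / W j) * y j = complex_of_real (W k) * (symc p (k - j) j * u0 j)"
          unfolding yu using W0[of j] by (simp add: field_simps)
      qed
      also have "\<dots> = complex_of_real (W k) * opP p u0 k" unfolding opP_def by (rule infsum_cmult_right')
      finally show ?thesis using W0[of k] by simp
    qed
    have u0e: "opP p u0 k - \<omega> * u0 k = f k" for k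
    proof -
      have "opP p u0 k - \<omega> * u0 k = (Aop A1 y k - \<omega> * y k) / complex_of_real (W k)"
        unfolding opu yu using W0[of k] by (simp add: field_simps)
      also have "\<dots> = f k" unfolding ye g_def using W0[of k] by simp
      finally show ?thesis .
    qed
    have usq: "(cmod (y k))\<^sup>2 = (cmod (u0 k))\<^sup>2 * exp (4 * lnorm k * \<delta>)" for k
      unfolding yu norm_mult norm_of_real W2[symmetric] using W0[of k] by (simp add: power_mult_distrib)
    have u0l: "l2 u0"
      unfolding l2_def
    proof (rule summable_on_comparison_test[OF yl[unfolded l2_def]])
      fix k
      have "(cmod (u0 k))\<^sup>2 \<le> (cmod (u0 k))\<^sup>2 * exp (4 * lnorm k * \<delta>)"
        using lnn[of k] \<delta> by (intro mult_le_cancel_left1[THEN iffD2]) (auto simp: mult_nonneg_nonneg)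
      then show "(cmod (u0 k))\<^sup>2 \<le> (cmod (y k))\<^sup>2" unfolding usq .
    qed simp
    have u0A: "Adelta \<delta> u0"
      unfolding Adelta_def L2T_l2 using u0l yl unfolding l2_def usq by simp
    have uniq: "u1 = u0" if u1l: "L2T u1" and u1e: "\<forall>k. opP p u1 k - \<omega> * u1 k = f k" for u1
    proof
      fix k
      have u1l': "l2 u1" using u1l unfolding L2T_l2 .
      have "Aop A0 (\<lambda>j. u1 j - u0 j) k - \<omega> * (u1 k - u0 k) = 0" for k
      proof -
        have "Aop A0 (\<lambda>j. u1 j - u0 j) k = Aop A0 u1 k - Aop A0 u0 k"
          by (rule kern.Aop_diff[OF kA0 u1l' u0l])
        moreover have "Aop A0 u1 k = opP p u1 k" "Aop A0 u0 k = opP p u0 k"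
          unfolding opP_Aop A0_def by simp_all
        ultimately show ?thesis using u1e u0e[of k] by (simp add: algebra_simps)
      qed
      then have "u1 k - u0 k = 0"
        using kern.unique0[OF kA0, of \<omega> "\<lambda>j. u1 j - u0 j" k] omS l2_diff[OF u1l' u0l]
        unfolding kern.S_def[OF kA0] S_def by blast
      then show "u1 k = u0 k" by simp
    qed
    show "\<exists>!u. L2T u \<and> (\<forall>k. opP p u k - \<omega> * u k = f k)"
    proof (rule ex1I[of _ u0])
      show "L2T u0 \<and> (\<forall>k. opP p u0 k - \<omega> * u0 k = f k)" using u0l u0e unfolding L2T_l2 by blast
      show "\<And>u. L2T u \<and> (\<forall>k. opP p u k - \<omega> * u k = f k) \<Longrightarrow> u = u0" using uniq by blast
    qed
    show "Adelta \<delta> u" if "L2T u \<and> (\<forall>k. opP p u k - \<omega> * u k = f k)" for u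
      using uniq[of u] u0A that by blast
  qed
  qed
qed

end

theorem lemmaB5:
  fixes p :: "complex ^ 'n::finite \<Rightarrow> complex ^ 'n \<Rightarrow> complex"
    and a b C0 :: real and U :: "((complex ^ 'n) \<times> (complex ^ 'n)) set"
  assumes ab: "a > 0" "b > 0"
    and U: "symb_region a b \<subseteq> U" "holo2 p U"
    and bound: "\<And>z \<zeta>. (z, \<zeta>) \<in> symb_region a b \<Longrightarrow> cmod (p z \<zeta>) \<le> C0"
    and periodic: "\<And>(x :: real ^ 'n) (\<xi> :: real ^ 'n) (k :: int ^ 'n).
        p (cvec (x + (2 * pi) *\<^sub>R ivec k)) (cvec \<xi>) = p (cvec x) (cvec \<xi>)"
    and sa: "selfadjP p"
  shows "\<exists>C>0. \<exists>\<delta>>0. \<forall>\<omega>. Im \<omega> \<ge> C \<longrightarrow>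
           (\<forall>f. Adelta \<delta> f \<longrightarrow>
              (\<exists>!u. L2T u \<and> (\<forall>k. opP p u k - \<omega> * u k = f k)) \<and>
              (\<forall>u. L2T u \<and> (\<forall>k. opP p u k - \<omega> * u k = f k) \<longrightarrow> Adelta \<delta> u))"
proof -
  interpret symb p a b C0 U
    using ab U bound periodic by unfold_locales auto
  show ?thesis by (rule main)
qed

end
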